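(* Let $(\mathcal X,\mathcal B,\pi)$ be a measure space with $\pi$ $\sigma$-finite, $r:\mathcal X\to\mathbb R$ measurable, and the noise stationary: $\{\varepsilon(x)\}$ a real-valued random field with $\varepsilon(x)\overset d=\varepsilon$ for all $x$ for some random variable $\varepsilon$, with i.i.d. copies independent of sampled points. Let $2\le K<\infty$, $\alpha\in\bigl(\frac{K-1}{K},1\bigr)$, $\rho:=(1-\alpha)K$, and $p_0,p_{\rm ref}\in\mathcal P_\pi$ with $\int p|\log p|\,d\pi<\infty$ for $p\in\{p_0,p_{\rm ref}\}$. Then for every $\eta>0$, $$\sup_{\|\Delta r\|_\infty\le\eta}\ \sup_{n\in\mathbb N\cup\{\infty\}}d_{\rm TV}\bigl(T^n_{\Delta r}p_0,\,T^n_0p_0\bigr)\le\frac{\eta\rho}{4(1-\rho)}.$$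
   Context: $\mathcal P_\pi$ = probability densities w.r.t. $\pi$. For $\Delta r\in L^\infty(\mathcal X,\mathcal B,\pi)$, the perturbed kernel is $H^K_{p,\Delta r}(x):=\mathbb E\bigl[K e^{r(x)+\Delta r(x)+\varepsilon(x)}/(e^{r(x)+\Delta r(x)+\varepsilon(x)}+\sum_{k=1}^{K-1}e^{r(X_k)+\Delta r(X_k)+\varepsilon_k(X_k)})\bigr]$ with $X_1,\dots,X_{K-1}$ i.i.d. with density $p$ independent of the i.i.d. noise copies $\varepsilon,\varepsilon_1,\dots$. The perturbed update map is $T_{\Delta r}p=\alpha p_{\rm ref}+(1-\alpha)pH^K_{p,\Delta r}$, $T^n_{\Delta r}$ its $n$-fold iterate, and $T^\infty_{\Delta r}p_0:=\lim_{n\to\infty}T^n_{\Delta r}p_0$ (limit in total variation). $d_{\rm TV}(p,q)=\frac12\int|p-q|\,d\pi$. *)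

theory Defs
  imports "HOL-Probability.Probability"
begin

definition is_density :: "'a measure \<Rightarrow> ('a \<Rightarrow> real) \<Rightarrow> bool" where
  "is_density M p \<longleftrightarrow> p \<in> borel_measurable M \<and> (\<forall>x\<in>space M. 0 \<le> p x)
      \<and> integrable M p \<and> (\<integral>x. p x \<partial>M) = 1"

definition d_TV :: "'a measure \<Rightarrow> ('a \<Rightarrow> real) \<Rightarrow> ('a \<Rightarrow> real) \<Rightarrow> real" where
  "d_TV M p q = (1/2) * (\<integral>x. \<bar>p x - q x\<bar> \<partial>M)"

text \<open>N is the law of the stationary noise epsilon.
  The expectation is over epsilon (first component) and K-1 i.i.d. pairs (X_k, epsilon_k(X_k)),
  X_k with density p and epsilon_k(X_k) with law N independent of X_k.\<close>
definition H_kernel :: "nat \<Rightarrow> 'a measure \<Rightarrow> real measure \<Rightarrow> ('a \<Rightarrow> real) \<Rightarrow> ('a \<Rightarrow> real)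
    \<Rightarrow> ('a \<Rightarrow> real) \<Rightarrow> 'a \<Rightarrow> real" where
  "H_kernel K M N r p dr x =
     (\<integral>z. real K * exp (r x + dr x + fst z) /
            (exp (r x + dr x + fst z) +
             (\<Sum>k<K - 1. exp (r (fst (snd z k)) + dr (fst (snd z k)) + snd (snd z k))))
      \<partial>(N \<Otimes>\<^sub>M PiM {..<K - 1} (\<lambda>_. density M (\<lambda>y. ennreal (p y)) \<Otimes>\<^sub>M N)))"

definition T_map :: "nat \<Rightarrow> 'a measure \<Rightarrow> real measure \<Rightarrow> ('a \<Rightarrow> real) \<Rightarrow> real
    \<Rightarrow> ('a \<Rightarrow> real) \<Rightarrow> ('a \<Rightarrow> real) \<Rightarrow> ('a \<Rightarrow> real) \<Rightarrow> ('a \<Rightarrow> real)" where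
  "T_map K M N r \<alpha> p_ref dr p =
     (\<lambda>x. \<alpha> * p_ref x + (1 - \<alpha>) * p x * H_kernel K M N r p dr x)"

end

theory Submission
  imports Defs
begin



lemma ln_lower_aux:
  fixes c :: real assumes "1 \<le> c" shows "2 * (c - 1) / (c + 1) \<le> ln c"
proof -
  let ?h = "\<lambda>c::real. ln c - 2 * (c - 1) / (c + 1)"
  have d: "(?h has_real_derivative (1/t - 4 / (t+1)^2)) (at t)" if "t > 0" for t
    using that by (auto intro!: derivative_eq_intros simp: field_simps power2_eq_square)
  have "?h 1 \<le> ?h c"
  proof (rule DERIV_nonneg_imp_nondecreasing[of 1 c])
    fix t assume t: "1 \<le> t" "t \<le> c"
    have "0 \<le> 1/t - 4/(t+1)^2"
    proof -
      have "0 \<le> (t-1)^2" by simp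
      then have "4 * t \<le> (t+1)^2" by (simp add: power2_eq_square algebra_simps)
      then show ?thesis using t by (simp add: field_simps)
    qed
    then show "\<exists>y. (?h has_real_derivative y) (at t) \<and> 0 \<le> y" using d[of t] t by auto
  qed (use assms in auto)
  then show ?thesis by simp
qed

lemma sig_lip_aux:
  fixes x y R :: real assumes "0 < y" "y \<le> x" "0 \<le> R"
  shows "x/(x+R) - y/(y+R) \<le> (ln x - ln y) / 4"
proof -
  define a where "a = sqrt x"
  define b where "b = sqrt y"
  have a: "a > 0" "x = a^2" using assms by (auto simp: a_def)
  have b: "b > 0" "y = b^2" using assms by (auto simp: b_def)
  have ab: "b \<le> a" using assms unfolding a_def b_def by simp
  have pa: "a^2+R > 0" "b^2+R>0" using a b assms by (auto intro: add_pos_nonneg)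
  have "x/(x+R) - y/(y+R) = R*(a^2-b^2)/((a^2+R)*(b^2+R))"
    using a b assms pa by (simp add: divide_simps) (simp add: algebra_simps)
  also have "\<dots> \<le> (a-b)/(a+b)"
  proof -
    have "0 \<le> (a*b - R)^2" by simp
    then have "R*(a+b)^2 \<le> (a^2+R)*(b^2+R)" by (simp add: power2_eq_square algebra_simps)
    then have "R*(a+b)^2*(a-b) \<le> (a^2+R)*(b^2+R)*(a-b)" using ab by (intro mult_right_mono) auto
    moreover have "R*(a^2-b^2)*(a+b) = R*(a+b)^2*(a-b)" by (simp add: power2_eq_square algebra_simps)
    ultimately have key: "R*(a^2-b^2)*(a+b) \<le> (a-b)*((a^2+R)*(b^2+R))" by (simp add: algebra_simps)
    have "a + b > 0" using a b by simp
    then show ?thesis using key pa by (simp add: divide_simps mult.commute mult.left_commute)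
  qed
  also have "\<dots> = (a/b - 1)/(a/b + 1)"
  proof -
    have "(a/b - 1)/(a/b + 1) = ((a - b)/b)/((a+b)/b)" using b by (simp add: field_simps)
    also have "\<dots> = (a-b)/(a+b)" using b by simp
    finally show ?thesis by simp
  qed
  also have "\<dots> \<le> ln (a/b) / 2" using ln_lower_aux[of "a/b"] ab b by (simp add: mult.commute)
  also have "ln (a/b) = (ln x - ln y)/2" using a b by (simp add: ln_div ln_realpow)
  finally show ?thesis by simp
qed

lemma sig_mono:
  fixes x y R :: real assumes "0 < y" "y \<le> x" "0 \<le> R"
  shows "y/(y+R) \<le> x/(x+R)"
proof -
  have "y*(x+R) \<le> x*(y+R)" using assms by (simp add: algebra_simps mult_left_mono)
  moreover have "y + R > 0" "x + R > 0" using assms by auto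
  ultimately show ?thesis by (simp add: divide_simps)
qed

lemma sig_lip:
  fixes x y R :: real assumes "0 < x" "0 < y" "0 \<le> R"
  shows "\<bar>x/(x+R) - y/(y+R)\<bar> \<le> \<bar>ln x - ln y\<bar> / 4"
proof (cases "y \<le> x")
  case True
  have "ln y \<le> ln x" using True assms by simp
  then show ?thesis using sig_lip_aux[of y x R] sig_mono[of y x R] assms True by simp
next
  case False
  have "ln x \<le> ln y" using False assms by simp
  then show ?thesis using sig_lip_aux[of x y R] sig_mono[of x y R] assms False by simp
qed

lemma soft_one:
  fixes x y :: "'i \<Rightarrow> real"
  assumes I: "finite I" "k \<in> I" and x: "\<forall>i\<in>I. 0 < x i" and y: "\<forall>i\<in>I. 0 < y i"
    and xy: "\<forall>i\<in>I-{k}. x i = y i"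
  shows "(\<Sum>i\<in>I. \<bar>x i / sum x I - y i / sum y I\<bar>) \<le> \<bar>ln (x k) - ln (y k)\<bar> / 2"
proof -
  define R where "R = sum x (I - {k})"
  have Ry: "sum y (I - {k}) = R" unfolding R_def using xy by (intro sum.cong) auto
  have R0: "0 \<le> R" unfolding R_def using x by (intro sum_nonneg) auto
  have Sx: "sum x I = x k + R" unfolding R_def using I by (simp add: sum.remove)
  have Sy: "sum y I = y k + R" using I Ry by (simp add: sum.remove)
  have xk: "x k > 0" and yk: "y k > 0" using x y I by auto
  have Sxp: "x k + R > 0" and Syp: "y k + R > 0" using xk yk R0 by auto
  have "(\<Sum>i\<in>I. \<bar>x i / sum x I - y i / sum y I\<bar>)
      = \<bar>x k / sum x I - y k / sum y I\<bar> + (\<Sum>i\<in>I-{k}. \<bar>x i / sum x I - y i / sum y I\<bar>)"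
    by (rule sum.remove[OF I])
  also have "(\<Sum>i\<in>I-{k}. \<bar>x i / sum x I - y i / sum y I\<bar>) = (\<Sum>i\<in>I-{k}. x i * \<bar>1 / sum x I - 1 / sum y I\<bar>)"
  proof (rule sum.cong)
    fix i assume i: "i \<in> I - {k}"
    then have "x i > 0" "y i = x i" using x xy by auto
    moreover have "x i / sum x I - x i / sum y I = x i * (1 / sum x I - 1 / sum y I)"
      by (simp add: right_diff_distrib)
    ultimately show "\<bar>x i / sum x I - y i / sum y I\<bar> = x i * \<bar>1 / sum x I - 1 / sum y I\<bar>"
      by (simp add: abs_mult)
  qed simp
  also have "\<dots> = R * \<bar>1 / sum x I - 1 / sum y I\<bar>" unfolding R_def by (simp add: sum_distrib_right)
  also have "\<dots> = \<bar>R / sum x I - R / sum y I\<bar>"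
  proof -
    have "R / sum x I - R / sum y I = R * (1 / sum x I - 1 / sum y I)" by (simp add: right_diff_distrib)
    then show ?thesis using R0 by (simp add: abs_mult)
  qed
  also have "R / sum x I = 1 - x k / sum x I" using Sxp Sx by (simp add: field_simps)
  also have "R / sum y I = 1 - y k / sum y I" using Syp Sy by (simp add: field_simps)
  finally have "(\<Sum>i\<in>I. \<bar>x i / sum x I - y i / sum y I\<bar>) = 2 * \<bar>x k / (x k + R) - y k / (y k + R)\<bar>"
    using Sx Sy by simp
  also have "\<dots> \<le> 2 * (\<bar>ln (x k) - ln (y k)\<bar> / 4)" using sig_lip[OF xk yk R0] by simp
  finally show ?thesis by simp
qed

lemma soft_hybrid:
  fixes x y :: "nat \<Rightarrow> real"
  assumes x: "\<forall>i<n. 0 < x i" and y: "\<forall>i<n. 0 < y i"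
    and xy: "\<forall>i<n. \<bar>ln (x i) - ln (y i)\<bar> \<le> \<eta>"
  shows "(\<Sum>i<n. \<bar>x i / sum x {..<n} - y i / sum y {..<n}\<bar>) \<le> real n * \<eta> / 2"
proof -
  define h where "h k = (\<lambda>i. if i < k then x i else y i)" for k
  define D where "D a b = (\<Sum>i<n. \<bar>a i / sum a {..<n} - b i / sum b {..<n}\<bar>)" for a b :: "nat \<Rightarrow> real"
  have tri: "D a c \<le> D a b + D b c" for a b c
    unfolding D_def sum.distrib[symmetric] by (intro sum_mono) linarith
  have step: "D (h (Suc k)) (h k) \<le> \<eta> / 2" if "k < n" for k
  proof -
    have "D (h (Suc k)) (h k) \<le> \<bar>ln (h (Suc k) k) - ln (h k k)\<bar> / 2"
      unfolding D_def using that x y by (intro soft_one) (auto simp: h_def)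
    also have "\<dots> \<le> \<eta> / 2" using xy that by (simp add: h_def)
    finally show ?thesis .
  qed
  have "D (h m) (h 0) \<le> real m * \<eta> / 2" if "m \<le> n" for m
    using that
  proof (induction m)
    case 0 then show ?case by (simp add: D_def)
  next
    case (Suc m)
    have "D (h (Suc m)) (h 0) \<le> D (h (Suc m)) (h m) + D (h m) (h 0)" by (rule tri)
    also have "\<dots> \<le> \<eta> / 2 + real m * \<eta> / 2" using Suc step by (intro add_mono) auto
    finally show ?case by (simp add: field_simps)
  qed
  moreover have e1: "sum (h n) {..<n} = sum x {..<n}" "sum (h 0) {..<n} = sum y {..<n}"
    by (auto simp: h_def intro!: sum.cong)
  moreover have "D (h n) (h 0) = D x y" unfolding D_def e1 by (intro sum.cong) (auto simp: h_def)
  ultimately have "D x y \<le> real n * \<eta> / 2" by (metis order_refl)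
  then show ?thesis by (simp add: D_def)
qed




locale setting =
  fixes M :: "'a measure" and N :: "real measure" and r :: "'a \<Rightarrow> real" and K :: nat
  assumes N: "prob_space N" and Nsets[measurable_cong]: "sets N = sets borel"
    and r[measurable]: "r \<in> borel_measurable M" and K: "2 \<le> K"
begin

definition P :: "('a \<Rightarrow> real) \<Rightarrow> ('a \<times> real) measure" where
  "P p = density M p \<Otimes>\<^sub>M N"
definition PK :: "('a \<Rightarrow> real) \<Rightarrow> nat \<Rightarrow> (nat \<Rightarrow> 'a \<times> real) measure" where
  "PK p n = PiM {..<n} (\<lambda>_. P p)"
definition u :: "('a \<Rightarrow> real) \<Rightarrow> 'a \<times> real \<Rightarrow> real" where
  "u d z = exp (r (fst z) + d (fst z) + snd z)"
definition Wt :: "('a \<Rightarrow> real) \<Rightarrow> (nat \<Rightarrow> 'a \<times> real) \<Rightarrow> nat \<Rightarrow> real" where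
  "Wt d z i = u d (z i) / (\<Sum>j<K. u d (z j))"

lemma sets_P[measurable_cong]: "sets (P p) = sets (M \<Otimes>\<^sub>M borel)"
  unfolding P_def by (intro sets_pair_measure_cong) (auto simp: Nsets)

lemma sets_PK[measurable_cong]: "sets (PK p n) = sets (PiM {..<n} (\<lambda>_. M \<Otimes>\<^sub>M borel))"
  unfolding PK_def by (intro sets_PiM_cong) (auto simp: sets_P)

lemma u_meas[measurable]: assumes [measurable]: "d \<in> borel_measurable M"
  shows "u d \<in> borel_measurable (M \<Otimes>\<^sub>M borel)"
  unfolding u_def by measurable

lemma u_comp_meas[measurable]: assumes [measurable]: "d \<in> borel_measurable M" and "j \<in> I"
  shows "(\<lambda>z. u d (z j)) \<in> borel_measurable (PiM I (\<lambda>_. M \<Otimes>\<^sub>M borel))"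
proof -
  have "(\<lambda>z. z j) \<in> measurable (PiM I (\<lambda>_. M \<Otimes>\<^sub>M borel)) (M \<Otimes>\<^sub>M borel)"
    using \<open>j \<in> I\<close> by (rule measurable_component_singleton)
  from measurable_compose[OF this u_meas[OF assms(1)]] show ?thesis .
qed

lemma sum_u_meas[measurable]: assumes [measurable]: "d \<in> borel_measurable M"
  shows "(\<lambda>z. \<Sum>j\<in>I. u d (z j)) \<in> borel_measurable (PiM I (\<lambda>_. M \<Otimes>\<^sub>M borel))"
  by (intro borel_measurable_sum u_comp_meas assms)

lemma Wt_meas[measurable]: assumes [measurable]: "d \<in> borel_measurable M" and "i < K"
  shows "(\<lambda>z. Wt d z i) \<in> borel_measurable (PiM {..<K} (\<lambda>_. M \<Otimes>\<^sub>M borel))"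
  unfolding Wt_def using \<open>i < K\<close> by (intro borel_measurable_divide sum_u_meas u_comp_meas assms) auto

lemma Wt_meas_PK[measurable]: assumes [measurable]: "d \<in> borel_measurable M" and "i < K"
  shows "(\<lambda>z. Wt d z i) \<in> borel_measurable (PK p K)"
  using \<open>i < K\<close> by measurable


lemma comp_meas_PK: assumes "f \<in> borel_measurable (M \<Otimes>\<^sub>M borel)" "i \<in> I"
  shows "(\<lambda>z. f (z i)) \<in> borel_measurable (PiM I (\<lambda>_. P p))"
proof -
  have "(\<lambda>z. z i) \<in> measurable (PiM I (\<lambda>_. P p)) (P p)"
    using \<open>i \<in> I\<close> by (rule measurable_component_singleton)
  moreover have "f \<in> borel_measurable (P p)" using assms(1) by (simp cong: measurable_cong_sets add: sets_P)
  ultimately show ?thesis by (rule measurable_compose)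
qed

end



lemma int_bound:
  fixes f :: "'b \<Rightarrow> real"
  assumes "prob_space A" "f \<in> borel_measurable A" "\<And>x. x \<in> space A \<Longrightarrow> \<bar>f x\<bar> \<le> c"
  shows "integrable A f"
proof -
  interpret prob_space A by fact
  show ?thesis by (rule integrable_const_bound[where B=c]) (use assms in auto)
qed

lemma pair_sf: "prob_space A \<Longrightarrow> prob_space B \<Longrightarrow> pair_sigma_finite A B"
  by (simp add: pair_sigma_finite_def prob_space_imp_sigma_finite)

lemma dens_prob: assumes "is_density M p" shows "prob_space (density M p)"
proof
  have p: "p \<in> borel_measurable M" "\<forall>x\<in>space M. 0 \<le> p x" "integrable M p" "(\<integral>x. p x \<partial>M) = 1"
    using assms by (auto simp: is_density_def)
  have "emeasure (density M p) (space M) = (\<integral>\<^sup>+x. ennreal (p x) \<partial>M)"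
    using p by (simp add: emeasure_density nn_integral_set_ennreal[symmetric] cong: nn_integral_cong)
  also have "\<dots> = ennreal (\<integral>x. p x \<partial>M)"
    using p by (intro nn_integral_eq_integral) auto
  finally show "emeasure (density M p) (space (density M p)) = 1" using p by simp
qed

lemma int_abs_le:
  fixes f :: "'b \<Rightarrow> real"
  assumes "prob_space A" "f \<in> borel_measurable A" "\<And>x. x \<in> space A \<Longrightarrow> \<bar>f x\<bar> \<le> c"
  shows "\<bar>integral\<^sup>L A f\<bar> \<le> c"
proof -
  interpret prob_space A by fact
  have i: "integrable A f" by (rule int_bound[OF assms])
  have b: "-c \<le> f x \<and> f x \<le> c" if "x \<in> space A" for x using assms(3)[OF that] by linarith
  have "integral\<^sup>L A f \<le> c" using b by (intro integral_le_const[OF i] AE_I2) auto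
  moreover have "-c \<le> integral\<^sup>L A f" using b by (intro integral_ge_const[OF i] AE_I2) auto
  ultimately show ?thesis by simp
qed

context setting begin

lemma P_prob: "is_density M p \<Longrightarrow> prob_space (P p)"
  unfolding P_def by (intro prob_space_pair dens_prob N)

lemma PK_prob: "is_density M p \<Longrightarrow> prob_space (PK p n)"
  unfolding PK_def by (intro prob_space_PiM P_prob)

lemma space_N[simp]: "space N = UNIV"
  using sets_eq_imp_space_eq[OF Nsets] by simp

lemma u_pos[simp]: "0 < u d z" by (simp add: u_def)

lemma Wt_nonneg: "0 \<le> Wt d z i"
  unfolding Wt_def by (intro divide_nonneg_nonneg sum_nonneg) (auto intro: less_imp_le)

lemma sum_u_pos: "0 < (\<Sum>j<K. u d (z j))"
proof -
  have "0 \<in> {..<K}" using K by simp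
  then show ?thesis by (intro sum_pos) auto
qed

lemma Wt_le1: "i < K \<Longrightarrow> Wt d z i \<le> 1"
  unfolding Wt_def using sum_u_pos[of d z]
  by (simp add: divide_simps) (rule member_le_sum, auto intro: less_imp_le)

lemma Wt_sum: "(\<Sum>i<K. Wt d z i) = 1"
  unfolding Wt_def using sum_u_pos[of d z] by (simp add: sum_divide_distrib[symmetric])


lemma exch:
  assumes p: "is_density M p" and d[measurable]: "d \<in> borel_measurable M"
    and f[measurable]: "f \<in> borel_measurable (M \<Otimes>\<^sub>M borel)" and i: "i < K"
  shows "(\<integral>z. f (z i) * Wt d z i \<partial>PK p K) = (\<integral>z. f (z (K-1)) * Wt d z (K-1) \<partial>PK p K)"
proof -
  define t where "t n = (if n = i then K-1 else if n = K-1 then i else n)" for n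
  have tt: "t (t n) = n" for n unfolding t_def by auto
  have tK: "t ` {..<K} \<subseteq> {..<K}" using i K unfolding t_def by auto
  have bij: "bij_betw t {..<K} {..<K}"
    by (rule bij_betw_byWitness[where f'=t]) (use tt tK in auto)
  have inj: "inj_on t {..<K}" using bij by (rule bij_betw_imp_inj_on)
  have tf: "t \<in> {..<K} \<rightarrow> {..<K}" using tK by auto
  define T where "T = (\<lambda>\<omega>::nat \<Rightarrow> 'a \<times> real. \<lambda>n\<in>{..<K}. \<omega> (t n))"
  have D: "distr (PK p K) (PK p K) T = PK p K"
    unfolding PK_def T_def
    using distr_PiM_reindex[of "{..<K}" "\<lambda>_. P p" t "{..<K}", OF P_prob[OF p] inj tf] by simp
  have Tm: "T \<in> measurable (PK p K) (PK p K)"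
    unfolding T_def PK_def
  proof (rule measurable_restrict)
    fix n assume "n \<in> {..<K}"
    then have "t n \<in> {..<K}" using tK by auto
    then show "(\<lambda>x. x (t n)) \<in> measurable (PiM {..<K} (\<lambda>_. P p)) (P p)"
      by (rule measurable_component_singleton)
  qed
  have hm: "(\<lambda>z. f (z (K-1)) * Wt d z (K-1)) \<in> borel_measurable (PK p K)"
    using K unfolding PK_def
    by (intro borel_measurable_times comp_meas_PK f Wt_meas_PK[unfolded PK_def] d) auto
  have "(\<integral>z. f (z (K-1)) * Wt d z (K-1) \<partial>PK p K) = (\<integral>z. f (z (K-1)) * Wt d z (K-1) \<partial>distr (PK p K) (PK p K) T)"
    using D by simp
  also have "\<dots> = (\<integral>\<omega>. f (T \<omega> (K-1)) * Wt d (T \<omega>) (K-1) \<partial>PK p K)"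
    by (rule integral_distr[OF Tm hm])
  also have "\<dots> = (\<integral>z. f (z i) * Wt d z i \<partial>PK p K)"
  proof (rule Bochner_Integration.integral_cong[OF refl])
    fix \<omega> assume "\<omega> \<in> space (PK p K)"
    have tK1: "t (K-1) = i" unfolding t_def by auto
    have K1: "K - 1 \<in> {..<K}" using K by auto
    have s: "(\<Sum>j<K. u d (T \<omega> j)) = (\<Sum>j<K. u d (\<omega> j))"
    proof -
      have "(\<Sum>j<K. u d (T \<omega> j)) = (\<Sum>j<K. u d (\<omega> (t j)))" unfolding T_def by (intro sum.cong) auto
      also have "\<dots> = (\<Sum>j<K. u d (\<omega> j))" by (rule sum.reindex_bij_betw[OF bij])
      finally show ?thesis .
    qed
    show "f (T \<omega> (K-1)) * Wt d (T \<omega>) (K-1) = f (\<omega> i) * Wt d \<omega> i"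
      unfolding Wt_def s using K1 tK1 by (simp add: T_def)
  qed
  finally show ?thesis by simp
qed


lemma rep:
  assumes p: "is_density M p" and d[measurable]: "d \<in> borel_measurable M"
    and \<phi>[measurable]: "\<phi> \<in> borel_measurable M" and \<phi>b: "\<And>x. \<bar>\<phi> x\<bar> \<le> 1"
  shows "(\<integral>x. \<phi> x * (p x * H_kernel K M N r p d x) \<partial>M)
       = (\<integral>z. (\<Sum>i<K. \<phi> (fst (z i)) * Wt d z i) \<partial>PK p K)"
proof -
  have pm[measurable]: "p \<in> borel_measurable M" and p0: "\<And>x. x \<in> space M \<Longrightarrow> 0 \<le> p x"
    using p by (auto simp: is_density_def)
  define \<mu> where "\<mu> = density M p"
  define Q where "Q = PK p (K-1)"
  define g where "g x e zs = real K * u d (x,e) / (u d (x,e) + (\<Sum>k<K-1. u d (zs k)))" for x e and zs :: "nat \<Rightarrow> 'a \<times> real"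
  define F where "F v = \<phi> (fst (fst v)) * g (fst (fst v)) (snd (fst v)) (snd v)" for v
  have \<mu>P: "prob_space \<mu>" unfolding \<mu>_def by (rule dens_prob[OF p])
  have QP: "prob_space Q" unfolding Q_def by (rule PK_prob[OF p])
  have PP: "prob_space (P p)" by (rule P_prob[OF p])
  interpret NQ: pair_sigma_finite N Q by (rule pair_sf[OF N QP])
  interpret \<mu>N: pair_sigma_finite \<mu> N by (rule pair_sf[OF \<mu>P N])
  interpret PQ: pair_sigma_finite "P p" Q by (rule pair_sf[OF PP QP])
  have g0: "0 \<le> g x e zs" for x e zs unfolding g_def
    by (intro divide_nonneg_nonneg mult_nonneg_nonneg add_nonneg_nonneg sum_nonneg) (auto intro: less_imp_le)
  have gK: "g x e zs \<le> real K" for x e zs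
  proof -
    have "0 \<le> (\<Sum>k<K-1. u d (zs k))" by (intro sum_nonneg) (auto intro: less_imp_le)
    moreover have "0 < u d (x,e) + (\<Sum>k<K-1. u d (zs k))" using calculation u_pos[of d "(x,e)"] by linarith
    ultimately have "u d (x,e) / (u d (x,e) + (\<Sum>k<K-1. u d (zs k))) \<le> 1" by (simp add: divide_simps)
    then have "real K * (u d (x,e) / (u d (x,e) + (\<Sum>k<K-1. u d (zs k)))) \<le> real K * 1"
      by (intro mult_left_mono) auto
    then show ?thesis unfolding g_def by simp
  qed
  have Fb: "\<bar>F v\<bar> \<le> real K" for v
  proof -
    have "\<bar>F v\<bar> = \<bar>\<phi> (fst (fst v))\<bar> * g (fst (fst v)) (snd (fst v)) (snd v)" unfolding F_def using g0 by (simp add: abs_mult)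
    also have "\<dots> \<le> 1 * real K" using \<phi>b g0 gK by (intro mult_mono) auto
    finally show ?thesis by simp
  qed
  have Fm0: "F \<in> borel_measurable ((M \<Otimes>\<^sub>M borel) \<Otimes>\<^sub>M PiM {..<K-1} (\<lambda>_. M \<Otimes>\<^sub>M borel))"
    unfolding F_def g_def by measurable
  have sQ: "sets Q = sets (PiM {..<K-1} (\<lambda>_. M \<Otimes>\<^sub>M borel))" unfolding Q_def by (rule sets_PK)
  have \<mu>NP: "\<mu> \<Otimes>\<^sub>M N = P p" by (simp add: \<mu>_def P_def)
  have s\<mu>N: "sets (\<mu> \<Otimes>\<^sub>M N) = sets (M \<Otimes>\<^sub>M borel)" unfolding \<mu>NP by (rule sets_P)
  have FmPQ: "F \<in> borel_measurable (P p \<Otimes>\<^sub>M Q)"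
    using Fm0 by (simp cong: measurable_cong_sets add: sets_pair_measure_cong[OF sets_P sQ])
  have Fm\<mu>NQ: "F \<in> borel_measurable ((\<mu> \<Otimes>\<^sub>M N) \<Otimes>\<^sub>M Q)"
    using Fm0 by (simp cong: measurable_cong_sets add: sets_pair_measure_cong[OF s\<mu>N sQ])
  have H_eq: "H_kernel K M N r p d x = (\<integral>w. g x (fst w) (snd w) \<partial>(N \<Otimes>\<^sub>M Q))" for x
    unfolding H_kernel_def g_def u_def Q_def PK_def P_def by simp
  note sQ[measurable_cong]
  have NQsf: "sigma_finite_measure (N \<Otimes>\<^sub>M Q)" by (rule prob_space_imp_sigma_finite[OF prob_space_pair[OF N QP]])
  have Qsf: "sigma_finite_measure Q" by (rule prob_space_imp_sigma_finite[OF QP])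
  have gm: "(\<lambda>(x,w). g x (fst w) (snd w)) \<in> borel_measurable (M \<Otimes>\<^sub>M (N \<Otimes>\<^sub>M Q))"
    unfolding g_def by measurable
  have Hm[measurable]: "(\<lambda>x. H_kernel K M N r p d x) \<in> borel_measurable M"
    unfolding H_eq using sigma_finite_measure.borel_measurable_lebesgue_integral[OF NQsf, of "\<lambda>x w. g x (fst w) (snd w)" M] gm by simp
  define G2 where "G2 y = (\<integral>zs. F (y, zs) \<partial>Q)" for y
  have S1: "(\<integral>x. \<phi> x * (p x * H_kernel K M N r p d x) \<partial>M) = (\<integral>x. \<phi> x * H_kernel K M N r p d x \<partial>\<mu>)"
  proof -
    have "(\<integral>x. \<phi> x * H_kernel K M N r p d x \<partial>\<mu>) = (\<integral>x. p x *\<^sub>R (\<phi> x * H_kernel K M N r p d x) \<partial>M)"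
      unfolding \<mu>_def by (rule integral_density) (auto simp: p0)
    then show ?thesis by (simp add: mult.left_commute)
  qed
  have S2: "\<phi> x * H_kernel K M N r p d x = (\<integral>e. G2 (x, e) \<partial>N)" if x: "x \<in> space M" for x
  proof -
    have m: "(\<lambda>w. \<phi> x * g x (fst w) (snd w)) \<in> borel_measurable (N \<Otimes>\<^sub>M Q)"
      using measurable_Pair2[OF gm x] by simp
    have i: "integrable (N \<Otimes>\<^sub>M Q) (\<lambda>w. \<phi> x * g x (fst w) (snd w))"
      by (rule int_bound[OF prob_space_pair[OF N QP] m]) (use Fb in \<open>auto simp: F_def\<close>)
    have "\<phi> x * H_kernel K M N r p d x = (\<integral>w. \<phi> x * g x (fst w) (snd w) \<partial>(N \<Otimes>\<^sub>M Q))"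
      unfolding H_eq by simp
    also have "\<dots> = (\<integral>e. (\<integral>zs. \<phi> x * g x e zs \<partial>Q) \<partial>N)"
      by (subst NQ.integral_fst'[OF i, symmetric]) simp
    finally show ?thesis by (simp add: G2_def F_def)
  qed
  have G2m: "G2 \<in> borel_measurable (\<mu> \<Otimes>\<^sub>M N)"
    unfolding G2_def using sigma_finite_measure.borel_measurable_lebesgue_integral[OF Qsf, of "\<lambda>y zs. F (y, zs)" "\<mu> \<Otimes>\<^sub>M N"] Fm\<mu>NQ
    by simp
  have G2b: "\<bar>G2 y\<bar> \<le> real K" if "y \<in> space (\<mu> \<Otimes>\<^sub>M N)" for y
    unfolding G2_def by (rule int_abs_le[OF QP measurable_Pair2[OF Fm\<mu>NQ that]]) (rule Fb)
  have S3: "(\<integral>x. (\<integral>e. G2 (x, e) \<partial>N) \<partial>\<mu>) = (\<integral>y. G2 y \<partial>(\<mu> \<Otimes>\<^sub>M N))"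
    by (rule \<mu>N.integral_fst'[OF int_bound[OF prob_space_pair[OF \<mu>P N] G2m G2b]])
  have S4: "(\<integral>y. G2 y \<partial>(\<mu> \<Otimes>\<^sub>M N)) = (\<integral>v. F v \<partial>(P p \<Otimes>\<^sub>M Q))"
    unfolding \<mu>NP G2_def
    by (rule PQ.integral_fst'[OF int_bound[OF prob_space_pair[OF PP QP] FmPQ Fb]])
  define E where "E v = (snd v)(K-1 := fst v)" for v :: "('a \<times> real) \<times> (nat \<Rightarrow> 'a \<times> real)"
  have ins: "insert (K-1) {..<K-1} = {..<K}" using K by auto
  have D: "distr (P p \<Otimes>\<^sub>M Q) (PK p K) E = PK p K"
  proof -
    have "(\<lambda>(x, X). X(K-1 := x)) = E" by (auto simp: E_def fun_eq_iff)
    then show ?thesis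
      using distr_pair_PiM_eq_PiM[of "{..<K-1}" "\<lambda>_. P p" "K-1"] PP unfolding PK_def Q_def ins by simp
  qed
  have Em: "E \<in> measurable (P p \<Otimes>\<^sub>M Q) (PK p K)"
    unfolding E_def PK_def
    by (rule measurable_fun_upd[where J="{..<K-1}"]) (use K in \<open>auto simp: Q_def PK_def\<close>)
  define h where "h z = \<phi> (fst (z (K-1))) * (real K * Wt d z (K-1))" for z
  have hm: "h \<in> borel_measurable (PK p K)"
    unfolding h_def using K unfolding PK_def
    by (intro borel_measurable_times borel_measurable_const comp_meas_PK Wt_meas_PK[unfolded PK_def] d) (auto simp: measurable_compose[OF measurable_fst \<phi>])
  have S5: "(\<integral>v. F v \<partial>(P p \<Otimes>\<^sub>M Q)) = (\<integral>z. h z \<partial>PK p K)"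
  proof -
    have "(\<integral>z. h z \<partial>PK p K) = (\<integral>z. h z \<partial>distr (P p \<Otimes>\<^sub>M Q) (PK p K) E)" using D by simp
    also have "\<dots> = (\<integral>v. h (E v) \<partial>(P p \<Otimes>\<^sub>M Q))" by (rule integral_distr[OF Em hm])
    also have "\<dots> = (\<integral>v. F v \<partial>(P p \<Otimes>\<^sub>M Q))"
    proof (rule Bochner_Integration.integral_cong[OF refl])
      fix v
      have "(\<Sum>j<K. u d (E v j)) = (\<Sum>j\<in>insert (K-1) {..<K-1}. u d (E v j))" by (simp only: ins)
      also have "\<dots> = u d (fst v) + (\<Sum>j<K-1. u d (E v j))" by (subst sum.insert) (auto simp: E_def)
      also have "(\<Sum>j<K-1. u d (E v j)) = (\<Sum>j<K-1. u d (snd v j))" by (intro sum.cong) (auto simp: E_def)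
      finally have s: "(\<Sum>j<K. u d (E v j)) = u d (fst v) + (\<Sum>j<K-1. u d (snd v j))" .
      have fv: "(fst (fst v), snd (fst v)) = fst v" by simp
      show "h (E v) = F v"
        unfolding h_def F_def g_def Wt_def s fv by (simp add: E_def)
    qed
    finally show ?thesis by simp
  qed
  have S6: "(\<integral>z. h z \<partial>PK p K) = (\<integral>z. (\<Sum>i<K. \<phi> (fst (z i)) * Wt d z i) \<partial>PK p K)"
  proof -
    have fm: "(\<lambda>y. \<phi> (fst y)) \<in> borel_measurable (M \<Otimes>\<^sub>M borel)" by measurable
    have ii: "integrable (PK p K) (\<lambda>z. \<phi> (fst (z i)) * Wt d z i)" if "i < K" for i
    proof (rule int_bound[OF PK_prob[OF p]])
      show "(\<lambda>z. \<phi> (fst (z i)) * Wt d z i) \<in> borel_measurable (PK p K)"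
        using that unfolding PK_def
        by (intro borel_measurable_times comp_meas_PK[OF fm] Wt_meas_PK[unfolded PK_def] d) auto
      fix z
      have "\<bar>\<phi> (fst (z i)) * Wt d z i\<bar> \<le> 1 * 1"
        unfolding abs_mult using \<phi>b Wt_nonneg Wt_le1[OF that] by (intro mult_mono) auto
      then show "\<bar>\<phi> (fst (z i)) * Wt d z i\<bar> \<le> 1" by simp
    qed
    have "(\<integral>z. (\<Sum>i<K. \<phi> (fst (z i)) * Wt d z i) \<partial>PK p K) = (\<Sum>i<K. (\<integral>z. \<phi> (fst (z i)) * Wt d z i \<partial>PK p K))"
      by (rule Bochner_Integration.integral_sum[where f="\<lambda>i z. \<phi> (fst (z i)) * Wt d z i"]) (use ii in auto)
    also have "\<dots> = (\<Sum>i<K. (\<integral>z. \<phi> (fst (z (K-1))) * Wt d z (K-1) \<partial>PK p K))"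
      by (intro sum.cong refl exch[OF p d fm]) auto
    also have "\<dots> = (\<integral>z. h z \<partial>PK p K)" unfolding h_def by (simp add: mult.left_commute)
    finally show ?thesis by simp
  qed
  have "(\<integral>x. \<phi> x * H_kernel K M N r p d x \<partial>\<mu>) = (\<integral>x. (\<integral>e. G2 (x, e) \<partial>N) \<partial>\<mu>)"
    by (rule Bochner_Integration.integral_cong) (auto simp: \<mu>_def S2)
  then show ?thesis using S1 S3 S4 S5 S6 by simp
qed

end



lemma int_abs_le2:
  fixes f :: "'b \<Rightarrow> real"
  assumes "prob_space A" "\<And>x. x \<in> space A \<Longrightarrow> \<bar>f x\<bar> \<le> c"
  shows "\<bar>integral\<^sup>L A f\<bar> \<le> c"
proof (cases "integrable A f")
  case True
  then show ?thesis using int_abs_le[OF assms(1) borel_measurable_integrable[OF True] assms(2)] by simp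
next
  case False
  interpret prob_space A by fact
  obtain x where "x \<in> space A" using not_empty by auto
  then have "0 \<le> c" using assms(2)[of x] by linarith
  then show ?thesis using False by (simp add: not_integrable_integral_eq)
qed

lemma abs_int_le_int_abs:
  fixes f :: "'b \<Rightarrow> real"
  shows "\<bar>integral\<^sup>L A f\<bar> \<le> (\<integral>x. \<bar>f x\<bar> \<partial>A)"
  using integral_norm_bound[of A f] by simp

context setting begin

lemma one_step:
  assumes p: "is_density M p" and q: "is_density M q"
    and g: "g \<in> borel_measurable (M \<Otimes>\<^sub>M borel)" and gb: "\<And>z. \<bar>g z\<bar> \<le> 1"
  shows "\<bar>integral\<^sup>L (P p) g - integral\<^sup>L (P q) g\<bar> \<le> (\<integral>x. \<bar>p x - q x\<bar> \<partial>M)"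
proof -
  define h where "h y = (\<integral>e. g (y, e) \<partial>N)" for y
  have hm: "h \<in> borel_measurable M"
  proof -
    have "g \<in> borel_measurable (M \<Otimes>\<^sub>M N)" using g by (simp cong: measurable_cong_sets add: sets_pair_measure_cong[OF refl Nsets])
    then show ?thesis unfolding h_def
      using sigma_finite_measure.borel_measurable_lebesgue_integral[OF prob_space_imp_sigma_finite[OF N], of "\<lambda>y e. g (y, e)" M]
      by simp
  qed
  have hb: "\<bar>h y\<bar> \<le> 1" for y unfolding h_def by (rule int_abs_le2[OF N gb])
  have rep1: "integral\<^sup>L (P p) g = (\<integral>y. p y * h y \<partial>M)" if p: "is_density M p" for p
  proof -
    have pm[measurable]: "p \<in> borel_measurable M" and p0: "\<And>x. x \<in> space M \<Longrightarrow> 0 \<le> p x"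
      using p by (auto simp: is_density_def)
    interpret pair_sigma_finite "density M p" N by (rule pair_sf[OF dens_prob[OF p] N])
    have gm: "g \<in> borel_measurable (P p)" using g by (simp cong: measurable_cong_sets add: sets_P)
    have i: "integrable (P p) g" by (rule int_bound[OF P_prob[OF p] gm gb])
    have "integral\<^sup>L (P p) g = (\<integral>y. h y \<partial>density M p)"
      unfolding h_def P_def using integral_fst'[OF i[unfolded P_def]] by simp
    also have "\<dots> = (\<integral>y. p y * h y \<partial>M)"
      by (subst integral_density) (auto simp: hm p0)
    finally show ?thesis .
  qed
  have ip: "integrable M (\<lambda>y. p y * h y)" if p: "is_density M p" for p
  proof (rule Bochner_Integration.integrable_bound)
    show "integrable M p" using p by (simp add: is_density_def)
    show "(\<lambda>y. p y * h y) \<in> borel_measurable M" using p hm by (intro borel_measurable_times) (auto simp: is_density_def)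
    show "AE x in M. norm (p x * h x) \<le> norm (p x)"
      using hb by (intro AE_I2) (simp add: abs_mult mult_left_le)
  qed
  have "integral\<^sup>L (P p) g - integral\<^sup>L (P q) g = (\<integral>y. (p y - q y) * h y \<partial>M)"
    unfolding rep1[OF p] rep1[OF q] using ip[OF p] ip[OF q] by (simp add: left_diff_distrib)
  also have "\<bar>\<dots>\<bar> \<le> (\<integral>y. \<bar>(p y - q y) * h y\<bar> \<partial>M)" by (rule abs_int_le_int_abs)
  also have "\<dots> \<le> (\<integral>x. \<bar>p x - q x\<bar> \<partial>M)"
  proof (rule integral_mono)
    have ipq: "integrable M (\<lambda>x. p x - q x)" using p q by (simp add: is_density_def)
    then show "integrable M (\<lambda>x. \<bar>p x - q x\<bar>)" by simp
    have "integrable M (\<lambda>y. (p y - q y) * h y)" using ip[OF p] ip[OF q] by (simp add: left_diff_distrib)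
    then show "integrable M (\<lambda>y. \<bar>(p y - q y) * h y\<bar>)" by simp
    fix x show "\<bar>(p x - q x) * h x\<bar> \<le> \<bar>p x - q x\<bar>" using hb[of x] by (simp add: abs_mult mult_left_le)
  qed
  finally show ?thesis .
qed

end



context setting begin

lemma hyb:
  assumes p: "is_density M p" and q: "is_density M q"
  shows "\<And>\<Psi>. \<Psi> \<in> borel_measurable (PiM {..<n} (\<lambda>_. M \<Otimes>\<^sub>M borel)) \<Longrightarrow> (\<And>z. \<bar>\<Psi> z\<bar> \<le> 1) \<Longrightarrow>
    \<bar>integral\<^sup>L (PK p n) \<Psi> - integral\<^sup>L (PK q n) \<Psi>\<bar> \<le> real n * (\<integral>x. \<bar>p x - q x\<bar> \<partial>M)"
proof (induction n)
  case 0
  then show ?case by (simp add: PK_def PiM_empty)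
next
  case (Suc n)
  note \<Psi>m = Suc.prems(1) and \<Psi>b = Suc.prems(2)
  define E where "E v = (snd v)(n := fst v)" for v :: "('a \<times> real) \<times> (nat \<Rightarrow> 'a \<times> real)"
  have ins: "insert n {..<n} = {..<Suc n}" by auto
  have D: "distr (P s \<Otimes>\<^sub>M PK s n) (PK s (Suc n)) E = PK s (Suc n)" if s: "is_density M s" for s
  proof -
    have "(\<lambda>(x, X). X(n := x)) = E" by (auto simp: E_def fun_eq_iff)
    then show ?thesis
      using distr_pair_PiM_eq_PiM[of "{..<n}" "\<lambda>_. P s" n] P_prob[OF s] unfolding PK_def ins by simp
  qed
  have Em: "E \<in> measurable (P s \<Otimes>\<^sub>M PK s n) (PK s (Suc n))" for s
    unfolding E_def PK_def
    by (rule measurable_fun_upd[where J="{..<n}"]) (auto simp: PK_def)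
  have \<Psi>m': "\<Psi> \<in> borel_measurable (PK s (Suc n))" for s
    using \<Psi>m by (simp cong: measurable_cong_sets add: sets_PK)
  define G where "G s x = (\<integral>X. \<Psi> (X(n := x)) \<partial>PK s n)" for s x
  have rep: "integral\<^sup>L (PK s (Suc n)) \<Psi> = integral\<^sup>L (P s) (G s)" if s: "is_density M s" for s
  proof -
    interpret pair_sigma_finite "P s" "PK s n" by (rule pair_sf[OF P_prob[OF s] PK_prob[OF s]])
    have "integral\<^sup>L (PK s (Suc n)) \<Psi> = integral\<^sup>L (distr (P s \<Otimes>\<^sub>M PK s n) (PK s (Suc n)) E) \<Psi>"
      using D[OF s] by simp
    also have "\<dots> = (\<integral>v. \<Psi> (E v) \<partial>(P s \<Otimes>\<^sub>M PK s n))" by (rule integral_distr[OF Em \<Psi>m'])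
    also have "\<dots> = integral\<^sup>L (P s) (G s)"
    proof -
      have m: "(\<lambda>v. \<Psi> (E v)) \<in> borel_measurable (P s \<Otimes>\<^sub>M PK s n)" by (rule measurable_compose[OF Em \<Psi>m'])
      have i: "integrable (P s \<Otimes>\<^sub>M PK s n) (\<lambda>v. \<Psi> (E v))"
        by (rule int_bound[OF prob_space_pair[OF P_prob[OF s] PK_prob[OF s]] m \<Psi>b])
      have Gabs: "G s = (\<lambda>x. \<integral>X. \<Psi> (X(n := x)) \<partial>PK s n)" by (simp add: fun_eq_iff G_def)
      show ?thesis using integral_fst'[OF i] unfolding Gabs E_def by simp
    qed
    finally show ?thesis .
  qed
  have Gm: "G s \<in> borel_measurable (M \<Otimes>\<^sub>M borel)" if s: "is_density M s" for s
  proof -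
    have m: "(\<lambda>v. \<Psi> (E v)) \<in> borel_measurable (P s \<Otimes>\<^sub>M PK s n)" by (rule measurable_compose[OF Em \<Psi>m'])
    have "(\<lambda>x. \<integral>X. \<Psi> (X(n := x)) \<partial>PK s n) \<in> borel_measurable (P s)"
      apply (rule sigma_finite_measure.borel_measurable_lebesgue_integral[OF prob_space_imp_sigma_finite[OF PK_prob[OF s]]])
      using m by (simp add: E_def split_beta')
    then have "G s \<in> borel_measurable (P s)" by (simp add: G_def[abs_def])
    then show ?thesis by (simp cong: measurable_cong_sets add: sets_P)
  qed
  have Gb: "\<bar>G s x\<bar> \<le> 1" if s: "is_density M s" for s x
    unfolding G_def by (rule int_abs_le2[OF PK_prob[OF s] \<Psi>b])
  define c where "c = (\<integral>x. \<bar>p x - q x\<bar> \<partial>M)"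
  have diff: "\<bar>G p x - G q x\<bar> \<le> real n * c" if x: "x \<in> space (M \<Otimes>\<^sub>M borel)" for x
  proof -
    have "(\<lambda>X. \<Psi> (X(n := x))) \<in> borel_measurable (PiM {..<n} (\<lambda>_. M \<Otimes>\<^sub>M borel))"
    proof (rule measurable_compose[OF _ \<Psi>m])
      show "(\<lambda>X. X(n := x)) \<in> measurable (PiM {..<n} (\<lambda>_. M \<Otimes>\<^sub>M borel)) (PiM {..<Suc n} (\<lambda>_. M \<Otimes>\<^sub>M borel))"
        by (rule measurable_fun_upd[where J="{..<n}"]) (use x in auto)
    qed
    then show ?thesis unfolding G_def c_def by (rule Suc.IH) (rule \<Psi>b)
  qed
  have ipG: "integrable (P p) (G s)" if s: "is_density M s" for s
    by (rule int_bound[OF P_prob[OF p] _ Gb[OF s]]) (use Gm[OF s] in \<open>simp cong: measurable_cong_sets add: sets_P\<close>)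
  have "integral\<^sup>L (PK p (Suc n)) \<Psi> - integral\<^sup>L (PK q (Suc n)) \<Psi>
      = (\<integral>x. G p x - G q x \<partial>P p) + (integral\<^sup>L (P p) (G q) - integral\<^sup>L (P q) (G q))"
    unfolding rep[OF p] rep[OF q] using ipG[OF p] ipG[OF q] by simp
  also have "\<bar>\<dots>\<bar> \<le> real n * c + c"
  proof (rule order_trans[OF abs_triangle_ineq add_mono])
    show "\<bar>\<integral>x. G p x - G q x \<partial>P p\<bar> \<le> real n * c"
      by (rule int_abs_le2[OF P_prob[OF p]]) (use diff sets_eq_imp_space_eq[OF sets_P] in auto)
    show "\<bar>integral\<^sup>L (P p) (G q) - integral\<^sup>L (P q) (G q)\<bar> \<le> c"
      unfolding c_def by (rule one_step[OF p q Gm[OF q] Gb[OF q]])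
  qed
  finally show ?case by (simp add: c_def algebra_simps)
qed

end



context setting begin

lemma H_alt: "H_kernel K M N r p d x =
   (\<integral>w. real K * u d (x, fst w) / (u d (x, fst w) + (\<Sum>k<K-1. u d (snd w k))) \<partial>(N \<Otimes>\<^sub>M PK p (K-1)))"
  unfolding H_kernel_def u_def PK_def P_def by simp

lemma H_meas:
  assumes p: "is_density M p" and d[measurable]: "d \<in> borel_measurable M"
  shows "(\<lambda>x. H_kernel K M N r p d x) \<in> borel_measurable M"
proof -
  define Q where "Q = PK p (K-1)"
  have QP: "prob_space Q" unfolding Q_def by (rule PK_prob[OF p])
  have sQ[measurable_cong]: "sets Q = sets (PiM {..<K-1} (\<lambda>_. M \<Otimes>\<^sub>M borel))" unfolding Q_def by (rule sets_PK)
  have NQsf: "sigma_finite_measure (N \<Otimes>\<^sub>M Q)" by (rule prob_space_imp_sigma_finite[OF prob_space_pair[OF N QP]])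
  have gm: "(\<lambda>(x,w). real K * u d (x, fst w) / (u d (x, fst w) + (\<Sum>k<K-1. u d (snd w k)))) \<in> borel_measurable (M \<Otimes>\<^sub>M (N \<Otimes>\<^sub>M Q))"
    by measurable
  show ?thesis
    unfolding H_alt Q_def[symmetric]
    apply (rule sigma_finite_measure.borel_measurable_lebesgue_integral[OF NQsf])
    using gm by simp
qed

lemma H_bounds:
  assumes p: "is_density M p"
  shows "0 \<le> H_kernel K M N r p d x \<and> H_kernel K M N r p d x \<le> real K"
proof -
  have QP: "prob_space (N \<Otimes>\<^sub>M PK p (K-1))" by (rule prob_space_pair[OF N PK_prob[OF p]])
  have b: "0 \<le> real K * u d (x, fst w) / (u d (x, fst w) + (\<Sum>k<K-1. u d (snd w k)))
     \<and> real K * u d (x, fst w) / (u d (x, fst w) + (\<Sum>k<K-1. u d (snd w k))) \<le> real K" for w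
  proof -
    have s0: "0 \<le> (\<Sum>k<K-1. u d (snd w k))" by (intro sum_nonneg) (auto intro: less_imp_le)
    have pos: "0 < u d (x, fst w) + (\<Sum>k<K-1. u d (snd w k))" using s0 u_pos[of d "(x, fst w)"] by linarith
    have "u d (x, fst w) / (u d (x, fst w) + (\<Sum>k<K-1. u d (snd w k))) \<le> 1" using pos s0 by (simp add: divide_simps)
    then have "real K * (u d (x, fst w) / (u d (x, fst w) + (\<Sum>k<K-1. u d (snd w k)))) \<le> real K * 1"
      by (intro mult_left_mono) auto
    moreover have "0 \<le> real K * u d (x, fst w) / (u d (x, fst w) + (\<Sum>k<K-1. u d (snd w k)))"
      using pos by (intro divide_nonneg_nonneg mult_nonneg_nonneg) (auto intro: less_imp_le)
    ultimately show ?thesis by simp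
  qed
  have "\<bar>H_kernel K M N r p d x\<bar> \<le> real K"
    unfolding H_alt by (rule int_abs_le2[OF QP]) (metis b abs_of_nonneg)
  moreover have "0 \<le> H_kernel K M N r p d x"
    unfolding H_alt by (rule Bochner_Integration.integral_nonneg) (use b in auto)
  ultimately show ?thesis by simp
qed

definition Fk :: "('a \<Rightarrow> real) \<Rightarrow> ('a \<Rightarrow> real) \<Rightarrow> 'a \<Rightarrow> real" where
  "Fk d p x = p x * H_kernel K M N r p d x"

lemma Fk_meas: "is_density M p \<Longrightarrow> d \<in> borel_measurable M \<Longrightarrow> Fk d p \<in> borel_measurable M"
  unfolding Fk_def[abs_def] using H_meas by (intro borel_measurable_times) (auto simp: is_density_def)

lemma Fk_int: assumes p: "is_density M p" and d: "d \<in> borel_measurable M"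
  shows "integrable M (Fk d p)"
proof (rule Bochner_Integration.integrable_bound)
  show "integrable M (\<lambda>x. real K * p x)" using p by (simp add: is_density_def)
  show "Fk d p \<in> borel_measurable M" by (rule Fk_meas[OF p d])
  show "AE x in M. norm (Fk d p x) \<le> norm (real K * p x)"
  proof (rule AE_I2)
    fix x assume x: "x \<in> space M"
    then have "0 \<le> p x" using p by (auto simp: is_density_def)
    moreover have "p x * H_kernel K M N r p d x \<le> p x * real K"
      using H_bounds[OF p, of d x] calculation by (intro mult_left_mono) auto
    ultimately show "norm (Fk d p x) \<le> norm (real K * p x)"
      unfolding Fk_def using H_bounds[OF p, of d x] by (simp add: abs_mult mult.commute)
  qed
qed

lemma Psi_meas:
  assumes d[measurable]: "d \<in> borel_measurable M" and \<phi>[measurable]: "\<phi> \<in> borel_measurable M"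
  shows "(\<lambda>z. \<Sum>i<K. \<phi> (fst (z i)) * Wt d z i) \<in> borel_measurable (PiM {..<K} (\<lambda>_. M \<Otimes>\<^sub>M borel))"
proof (rule borel_measurable_sum)
  fix i assume i: "i \<in> {..<K}"
  have "(\<lambda>z. \<phi> (fst z)) \<in> borel_measurable (M \<Otimes>\<^sub>M borel)" by measurable
  from measurable_compose[OF measurable_component_singleton[OF i] this]
  show "(\<lambda>z. \<phi> (fst (z i)) * Wt d z i) \<in> borel_measurable (PiM {..<K} (\<lambda>_. M \<Otimes>\<^sub>M borel))"
    using i by (intro borel_measurable_times Wt_meas d) auto
qed

lemma Psi_bound:
  assumes \<phi>b: "\<And>x. \<bar>\<phi> x\<bar> \<le> 1"
  shows "\<bar>\<Sum>i<K. \<phi> (fst (z i)) * Wt d z i\<bar> \<le> 1"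
proof -
  have "\<bar>\<Sum>i<K. \<phi> (fst (z i)) * Wt d z i\<bar> \<le> (\<Sum>i<K. \<bar>\<phi> (fst (z i)) * Wt d z i\<bar>)" by (rule sum_abs)
  also have "\<dots> \<le> (\<Sum>i<K. Wt d z i)"
    by (intro sum_mono) (use \<phi>b Wt_nonneg in \<open>auto simp: abs_mult intro: mult_left_le_one_le\<close>)
  also have "\<dots> = 1" by (rule Wt_sum)
  finally show ?thesis .
qed

lemma Fk_mass: assumes p: "is_density M p" and d: "d \<in> borel_measurable M"
  shows "(\<integral>x. Fk d p x \<partial>M) = 1"
proof -
  have "(\<integral>x. Fk d p x \<partial>M) = (\<integral>x. (\<lambda>_. 1) x * (p x * H_kernel K M N r p d x) \<partial>M)" by (simp add: Fk_def)
  also have "\<dots> = (\<integral>z. (\<Sum>i<K. (\<lambda>_. 1) (fst (z i)) * Wt d z i) \<partial>PK p K)"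
    by (rule rep[OF p d]) auto
  also have "\<dots> = 1" using Wt_sum prob_space.prob_space[OF PK_prob[OF p]] by simp
  finally show ?thesis .
qed

end



lemma abs_sgn_mult: "\<bar>x::real\<bar> = sgn x * x"
  by (cases "x < 0") (auto simp: sgn_if)

lemma sgn_le1: "\<bar>sgn (x::real)\<bar> \<le> 1"
  by (simp add: sgn_if)

context setting begin

lemma dual_split:
  fixes f g :: "'a \<Rightarrow> real"
  assumes f: "integrable M f" and g: "integrable M g"
  shows "(\<integral>x. \<bar>f x - g x\<bar> \<partial>M) = (\<integral>x. sgn (f x - g x) * f x \<partial>M) - (\<integral>x. sgn (f x - g x) * g x \<partial>M)"
proof -
  have m: "(\<lambda>x. sgn (f x - g x)) \<in> borel_measurable M" using f g by measurable
  have i: "integrable M (\<lambda>x. sgn (f x - g x) * h x)" if h: "integrable M h" for h :: "'a \<Rightarrow> real"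
  proof (rule Bochner_Integration.integrable_bound[OF integrable_abs[OF h]])
    show "(\<lambda>x. sgn (f x - g x) * h x) \<in> borel_measurable M" using m h by measurable
    show "AE x in M. norm (sgn (f x - g x) * h x) \<le> norm \<bar>h x\<bar>"
      by (intro AE_I2) (simp add: abs_mult mult_left_le_one_le sgn_le1)
  qed
  have "(\<integral>x. \<bar>f x - g x\<bar> \<partial>M) = (\<integral>x. sgn (f x - g x) * f x - sgn (f x - g x) * g x \<partial>M)"
    by (intro Bochner_Integration.integral_cong refl) (simp add: abs_sgn_mult right_diff_distrib)
  also have "\<dots> = (\<integral>x. sgn (f x - g x) * f x \<partial>M) - (\<integral>x. sgn (f x - g x) * g x \<partial>M)"
    by (rule Bochner_Integration.integral_diff[OF i[OF f] i[OF g]])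
  finally show ?thesis .
qed

lemma contr:
  assumes p: "is_density M p" and q: "is_density M q" and d[measurable]: "d \<in> borel_measurable M"
  shows "(\<integral>x. \<bar>Fk d p x - Fk d q x\<bar> \<partial>M) \<le> real K * (\<integral>x. \<bar>p x - q x\<bar> \<partial>M)"
proof -
  define \<phi> where "\<phi> x = sgn (Fk d p x - Fk d q x)" for x
  have \<phi>m[measurable]: "\<phi> \<in> borel_measurable M" unfolding \<phi>_def[abs_def] using Fk_meas[OF p d] Fk_meas[OF q d] by measurable
  have \<phi>b: "\<bar>\<phi> x\<bar> \<le> 1" for x unfolding \<phi>_def by (rule sgn_le1)
  define \<Psi> where "\<Psi> z = (\<Sum>i<K. \<phi> (fst (z i)) * Wt d z i)" for z
  have "(\<integral>x. \<bar>Fk d p x - Fk d q x\<bar> \<partial>M) = (\<integral>x. \<phi> x * Fk d p x \<partial>M) - (\<integral>x. \<phi> x * Fk d q x \<partial>M)"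
    unfolding \<phi>_def by (rule dual_split[OF Fk_int[OF p d] Fk_int[OF q d]])
  also have "\<dots> = integral\<^sup>L (PK p K) \<Psi> - integral\<^sup>L (PK q K) \<Psi>"
    unfolding Fk_def \<Psi>_def[abs_def] rep[OF p d \<phi>m \<phi>b] rep[OF q d \<phi>m \<phi>b] ..
  also have "\<dots> \<le> \<bar>integral\<^sup>L (PK p K) \<Psi> - integral\<^sup>L (PK q K) \<Psi>\<bar>" by simp
  also have "\<dots> \<le> real K * (\<integral>x. \<bar>p x - q x\<bar> \<partial>M)"
    by (rule hyb[OF p q]) (unfold \<Psi>_def, rule Psi_meas[OF d \<phi>m], rule Psi_bound[OF \<phi>b])
  finally show ?thesis .
qed

lemma AE_coords:
  fixes \<eta> :: real
  assumes p: "is_density M p" and d[measurable]: "d \<in> borel_measurable M" and ae: "AE x in M. \<bar>d x\<bar> \<le> \<eta>"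
  shows "AE z in PK p K. \<forall>i\<in>{..<K}. \<bar>d (fst (z i))\<bar> \<le> \<eta>"
proof -
  have pm[measurable]: "p \<in> borel_measurable M" using p by (simp add: is_density_def)
  have pm': "(\<lambda>x. ennreal (p x)) \<in> borel_measurable M" by measurable
  have A1: "AE y in density M p. \<bar>d y\<bar> \<le> \<eta>"
    by (subst AE_density[OF pm']) (use ae in \<open>auto elim: eventually_mono\<close>)
  interpret pair_sigma_finite "density M p" N by (rule pair_sf[OF dens_prob[OF p] N])
  have A2: "AE v in P p. \<bar>d (fst v)\<bar> \<le> \<eta>"
  proof -
    have "d \<in> borel_measurable (density M p)" by simp
    from measurable_compose[OF measurable_fst[of "density M p" N] this]
    have m0: "(\<lambda>x. d (fst x)) \<in> borel_measurable (density M p \<Otimes>\<^sub>M N)" .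
    have m: "(\<lambda>x. \<bar>d (fst x)\<bar>) \<in> borel_measurable (density M p \<Otimes>\<^sub>M N)" using borel_measurable_abs[OF m0] by simp
    have "Measurable.pred (density M p \<Otimes>\<^sub>M N) (\<lambda>x. \<bar>d (fst x)\<bar> \<le> \<eta>)"
      using m by measurable
    then have "{x \<in> space (density M p \<Otimes>\<^sub>M N). \<bar>d (fst x)\<bar> \<le> \<eta>} \<in> sets (density M p \<Otimes>\<^sub>M N)"
      by (simp add: Measurable.pred_def)
    moreover have "AE x in density M p. AE y in N. \<bar>d x\<bar> \<le> \<eta>"
      using A1 by (rule eventually_mono) simp
    ultimately show ?thesis using AE_pair_iff[of "\<lambda>x y. \<bar>d x\<bar> \<le> \<eta>"]
      unfolding P_def by simp
  qed
  have "\<forall>i\<in>{..<K}. AE z in PK p K. \<bar>d (fst (z i))\<bar> \<le> \<eta>"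
    unfolding PK_def using P_prob[OF p] A2 by (auto intro: AE_PiM_component)
  then show ?thesis by (subst eventually_ball_finite_distrib) auto
qed

lemma pert:
  assumes p: "is_density M p" and d[measurable]: "d \<in> borel_measurable M" and ae: "AE x in M. \<bar>d x\<bar> \<le> \<eta>"
  shows "(\<integral>x. \<bar>Fk d p x - Fk (\<lambda>_. 0) p x\<bar> \<partial>M) \<le> real K * \<eta> / 2"
proof -
  have z[measurable]: "(\<lambda>_. 0::real) \<in> borel_measurable M" by simp
  define \<phi> where "\<phi> x = sgn (Fk d p x - Fk (\<lambda>_. 0) p x)" for x
  have \<phi>m[measurable]: "\<phi> \<in> borel_measurable M" unfolding \<phi>_def[abs_def] using Fk_meas[OF p d] Fk_meas[OF p z] by measurable
  have \<phi>b: "\<bar>\<phi> x\<bar> \<le> 1" for x unfolding \<phi>_def by (rule sgn_le1)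
  define \<Psi> where "\<Psi> d z = (\<Sum>i<K. \<phi> (fst (z i)) * Wt d z i)" for d z
  have \<Psi>m: "\<Psi> d' \<in> borel_measurable (PK p K)" if [measurable]: "d' \<in> borel_measurable M" for d'
    using Psi_meas[OF that \<phi>m] unfolding \<Psi>_def[abs_def] by (simp cong: measurable_cong_sets add: sets_PK)
  have \<Psi>i: "integrable (PK p K) (\<Psi> d')" if [measurable]: "d' \<in> borel_measurable M" for d'
    by (rule int_bound[OF PK_prob[OF p] \<Psi>m[OF that]]) (unfold \<Psi>_def, rule Psi_bound[OF \<phi>b])
  have "(\<integral>x. \<bar>Fk d p x - Fk (\<lambda>_. 0) p x\<bar> \<partial>M) = (\<integral>x. \<phi> x * Fk d p x \<partial>M) - (\<integral>x. \<phi> x * Fk (\<lambda>_. 0) p x \<partial>M)"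
    unfolding \<phi>_def by (rule dual_split[OF Fk_int[OF p d] Fk_int[OF p z]])
  also have "\<dots> = integral\<^sup>L (PK p K) (\<Psi> d) - integral\<^sup>L (PK p K) (\<Psi> (\<lambda>_. 0))"
    unfolding Fk_def \<Psi>_def[abs_def] rep[OF p d \<phi>m \<phi>b] rep[OF p z \<phi>m \<phi>b] ..
  also have "\<dots> = (\<integral>z. \<Psi> d z - \<Psi> (\<lambda>_. 0) z \<partial>PK p K)"
    by (rule Bochner_Integration.integral_diff[symmetric, OF \<Psi>i[OF d] \<Psi>i[OF z]])
  also have "\<dots> \<le> real K * \<eta> / 2"
  proof (rule prob_space.integral_le_const[OF PK_prob[OF p]])
    show "integrable (PK p K) (\<lambda>z. \<Psi> d z - \<Psi> (\<lambda>_. 0) z)" using \<Psi>i[OF d] \<Psi>i[OF z] by simp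
    show "AE z in PK p K. \<Psi> d z - \<Psi> (\<lambda>_. 0) z \<le> real K * \<eta> / 2"
      using AE_coords[OF p d ae]
    proof (rule eventually_mono)
      fix z :: "nat \<Rightarrow> 'a \<times> real" assume zb: "\<forall>i\<in>{..<K}. \<bar>d (fst (z i))\<bar> \<le> \<eta>"
      have "\<Psi> d z - \<Psi> (\<lambda>_. 0) z = (\<Sum>i<K. \<phi> (fst (z i)) * (Wt d z i - Wt (\<lambda>_. 0) z i))"
        unfolding \<Psi>_def by (simp add: sum_subtractf[symmetric] right_diff_distrib)
      also have "\<dots> \<le> (\<Sum>i<K. \<bar>Wt d z i - Wt (\<lambda>_. 0) z i\<bar>)"
      proof (rule sum_mono)
        fix i
        have "\<phi> (fst (z i)) * (Wt d z i - Wt (\<lambda>_. 0) z i) \<le> \<bar>\<phi> (fst (z i)) * (Wt d z i - Wt (\<lambda>_. 0) z i)\<bar>" by simp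
        also have "\<dots> \<le> \<bar>Wt d z i - Wt (\<lambda>_. 0) z i\<bar>" using \<phi>b by (simp add: abs_mult mult_left_le_one_le)
        finally show "\<phi> (fst (z i)) * (Wt d z i - Wt (\<lambda>_. 0) z i) \<le> \<bar>Wt d z i - Wt (\<lambda>_. 0) z i\<bar>" .
      qed
      also have "\<dots> \<le> real K * \<eta> / 2"
        unfolding Wt_def
      proof (rule soft_hybrid[where x="\<lambda>i. u d (z i)" and y="\<lambda>i. u (\<lambda>_. 0) (z i)"])
        show "\<forall>i<K. \<bar>ln (u d (z i)) - ln (u (\<lambda>_. 0) (z i))\<bar> \<le> \<eta>"
          using zb by (simp add: u_def)
      qed auto
      finally show "\<Psi> d z - \<Psi> (\<lambda>_. 0) z \<le> real K * \<eta> / 2" .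
    qed
  qed
  finally show ?thesis .
qed

end



context setting begin

lemma T_eq: "T_map K M N r \<alpha> p_ref d p = (\<lambda>x. \<alpha> * p_ref x + (1 - \<alpha>) * Fk d p x)"
  by (simp add: T_map_def Fk_def fun_eq_iff mult.assoc)

lemma T_density:
  assumes a: "0 \<le> \<alpha>" "\<alpha> \<le> 1" and pref: "is_density M p_ref" and p: "is_density M p"
    and d: "d \<in> borel_measurable M"
  shows "is_density M (T_map K M N r \<alpha> p_ref d p)"
proof -
  have pr: "p_ref \<in> borel_measurable M" "\<forall>x\<in>space M. 0 \<le> p_ref x" "integrable M p_ref" "(\<integral>x. p_ref x \<partial>M) = 1"
    using pref by (auto simp: is_density_def)
  have F0: "0 \<le> Fk d p x" if "x \<in> space M" for x
    using p that H_bounds[OF p, of d x] by (auto simp: Fk_def is_density_def)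
  show ?thesis unfolding is_density_def T_eq
  proof (intro conjI ballI)
    show "(\<lambda>x. \<alpha> * p_ref x + (1 - \<alpha>) * Fk d p x) \<in> borel_measurable M"
      using pr(1) Fk_meas[OF p d] by measurable
    fix x assume "x \<in> space M"
    then show "0 \<le> \<alpha> * p_ref x + (1 - \<alpha>) * Fk d p x" using pr(2) F0 a by auto
  next
    show "integrable M (\<lambda>x. \<alpha> * p_ref x + (1 - \<alpha>) * Fk d p x)"
      using pr(3) Fk_int[OF p d] by simp
    show "(\<integral>x. \<alpha> * p_ref x + (1 - \<alpha>) * Fk d p x \<partial>M) = 1"
      using pr(3,4) Fk_int[OF p d] Fk_mass[OF p d] by simp
  qed
qed

lemma dens_int: "is_density M p \<Longrightarrow> integrable M p" by (simp add: is_density_def)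

lemma main_loc:
  fixes \<alpha> \<eta> :: real
  assumes a: "(real K - 1) / real K < \<alpha>" "\<alpha> < 1"
    and p0: "is_density M p0" and pref: "is_density M p_ref" and \<eta>: "\<eta> > 0"
    and dr: "dr \<in> borel_measurable M" and ae: "AE x in M. \<bar>dr x\<bar> \<le> \<eta>"
  shows "(\<forall>n. d_TV M ((T_map K M N r \<alpha> p_ref dr ^^ n) p0)
                        ((T_map K M N r \<alpha> p_ref (\<lambda>_. 0) ^^ n) p0)
                 \<le> \<eta> * ((1 - \<alpha>) * real K) / (4 * (1 - (1 - \<alpha>) * real K)))
         \<and> (\<forall>L L0. is_density M L \<and> is_density M L0
              \<and> (\<lambda>n. d_TV M ((T_map K M N r \<alpha> p_ref dr ^^ n) p0) L) \<longlonglongrightarrow> 0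
              \<and> (\<lambda>n. d_TV M ((T_map K M N r \<alpha> p_ref (\<lambda>_. 0) ^^ n) p0) L0) \<longlonglongrightarrow> 0
              \<longrightarrow> d_TV M L L0 \<le> \<eta> * ((1 - \<alpha>) * real K) / (4 * (1 - (1 - \<alpha>) * real K)))"
proof -
  define pn where "pn n = (T_map K M N r \<alpha> p_ref dr ^^ n) p0" for n
  define qn where "qn n = (T_map K M N r \<alpha> p_ref (\<lambda>_. 0) ^^ n) p0" for n
  define \<rho> where "\<rho> = (1 - \<alpha>) * real K"
  define A where "A = \<rho> * \<eta> / (2 * (1 - \<rho>))"
  define B where "B = \<eta> * ((1 - \<alpha>) * real K) / (4 * (1 - (1 - \<alpha>) * real K))"
  have Kp: "real K > 0" using K by simp
  have \<rho>0: "0 < \<rho>" unfolding \<rho>_def using a Kp by simp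
  have \<rho>1: "\<rho> < 1"
  proof -
    have "real K - 1 < \<alpha> * real K" using a(1) Kp by (simp add: divide_less_eq)
    then show ?thesis unfolding \<rho>_def by (simp add: algebra_simps)
  qed
  have a01: "0 \<le> \<alpha>" "\<alpha> \<le> 1"
  proof -
    have "0 \<le> (real K - 1) / real K" using K by simp
    then show "0 \<le> \<alpha>" using a by linarith
  qed (use a in simp)
  have z: "(\<lambda>_. 0::real) \<in> borel_measurable M" by simp
  have dens: "is_density M (pn n) \<and> is_density M (qn n)" for n
  proof (induction n)
    case 0 then show ?case using p0 by (simp add: pn_def qn_def)
  next
    case (Suc n)
    have "pn (Suc n) = T_map K M N r \<alpha> p_ref dr (pn n)" "qn (Suc n) = T_map K M N r \<alpha> p_ref (\<lambda>_. 0) (qn n)"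
      by (simp_all add: pn_def qn_def)
    then show ?case using Suc T_density[OF a01 pref _ dr] T_density[OF a01 pref _ z] by simp
  qed
  have A0: "0 \<le> A" unfolding A_def using \<rho>0 \<rho>1 \<eta> by simp
  have bound: "(\<integral>x. \<bar>pn n x - qn n x\<bar> \<partial>M) \<le> A" for n
  proof (induction n)
    case 0 then show ?case using A0 by (simp add: pn_def qn_def)
  next
    case (Suc n)
    have p: "is_density M (pn n)" and q: "is_density M (qn n)" using dens by auto
    have e: "pn (Suc n) x - qn (Suc n) x = (1 - \<alpha>) * (Fk dr (pn n) x - Fk (\<lambda>_. 0) (qn n) x)" for x
    proof -
      have "pn (Suc n) x = \<alpha> * p_ref x + (1 - \<alpha>) * Fk dr (pn n) x"
        "qn (Suc n) x = \<alpha> * p_ref x + (1 - \<alpha>) * Fk (\<lambda>_. 0) (qn n) x"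
        by (simp_all add: pn_def qn_def T_eq)
      then show ?thesis by (simp add: right_diff_distrib)
    qed
    have i1: "integrable M (\<lambda>x. \<bar>Fk dr (pn n) x - Fk (\<lambda>_. 0) (pn n) x\<bar>)"
      using Fk_int[OF p dr] Fk_int[OF p z] by simp
    have i2: "integrable M (\<lambda>x. \<bar>Fk (\<lambda>_. 0) (pn n) x - Fk (\<lambda>_. 0) (qn n) x\<bar>)"
      using Fk_int[OF p z] Fk_int[OF q z] by simp
    have i3: "integrable M (\<lambda>x. \<bar>Fk dr (pn n) x - Fk (\<lambda>_. 0) (qn n) x\<bar>)"
      using Fk_int[OF p dr] Fk_int[OF q z] by simp
    define X where "X = (\<integral>x. \<bar>Fk dr (pn n) x - Fk (\<lambda>_. 0) (qn n) x\<bar> \<partial>M)"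
    have s1: "(\<integral>x. \<bar>pn (Suc n) x - qn (Suc n) x\<bar> \<partial>M) = (1 - \<alpha>) * X"
    proof -
      have "(\<lambda>x. \<bar>pn (Suc n) x - qn (Suc n) x\<bar>) = (\<lambda>x. (1 - \<alpha>) * \<bar>Fk dr (pn n) x - Fk (\<lambda>_. 0) (qn n) x\<bar>)"
        unfolding e using a01 by (simp add: abs_mult fun_eq_iff)
      then show ?thesis unfolding X_def by simp
    qed
    have "X \<le> (\<integral>x. \<bar>Fk dr (pn n) x - Fk (\<lambda>_. 0) (pn n) x\<bar> + \<bar>Fk (\<lambda>_. 0) (pn n) x - Fk (\<lambda>_. 0) (qn n) x\<bar> \<partial>M)"
      unfolding X_def by (rule integral_mono[OF i3 Bochner_Integration.integrable_add[OF i1 i2]]) arith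
    also have "\<dots> = (\<integral>x. \<bar>Fk dr (pn n) x - Fk (\<lambda>_. 0) (pn n) x\<bar> \<partial>M) + (\<integral>x. \<bar>Fk (\<lambda>_. 0) (pn n) x - Fk (\<lambda>_. 0) (qn n) x\<bar> \<partial>M)"
      by (rule Bochner_Integration.integral_add[OF i1 i2])
    also have "\<dots> \<le> real K * \<eta> / 2 + real K * (\<integral>x. \<bar>pn n x - qn n x\<bar> \<partial>M)"
      by (rule add_mono[OF pert[OF p dr ae] contr[OF p q z]])
    also have "\<dots> \<le> real K * \<eta> / 2 + real K * A"
      by (rule add_left_mono[OF mult_left_mono[OF Suc.IH]]) (use Kp in simp)
    finally have X: "X \<le> real K * \<eta> / 2 + real K * A" .
    have "(1 - \<alpha>) * X \<le> (1 - \<alpha>) * (real K * \<eta> / 2 + real K * A)"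
      by (rule mult_left_mono[OF X]) (use a01 in simp)
    also have "\<dots> = \<rho> * \<eta> / 2 + \<rho> * A" unfolding \<rho>_def by (simp add: distrib_left mult.assoc)
    also have "\<dots> = A"
    proof -
      have ne: "1 - \<rho> \<noteq> 0" using \<rho>1 by simp
      have "(1 - \<rho>) * A = \<rho> * \<eta> / 2" unfolding A_def using ne by (simp add: field_simps)
      then show ?thesis by (simp add: algebra_simps)
    qed
    finally show ?case using s1 by simp
  qed
  have AB: "A / 2 = B" unfolding A_def B_def \<rho>_def by (simp add: field_simps)
  have part1: "d_TV M (pn n) (qn n) \<le> B" for n
    unfolding d_TV_def using bound[of n] AB by simp
  have part2: "d_TV M L L0 \<le> B"
    if L: "is_density M L" "is_density M L0"
      and l1: "(\<lambda>n. d_TV M (pn n) L) \<longlonglongrightarrow> 0" and l2: "(\<lambda>n. d_TV M (qn n) L0) \<longlonglongrightarrow> 0" for L L0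
  proof -
    have tri: "d_TV M L L0 \<le> d_TV M (pn n) L + B + d_TV M (qn n) L0" for n
    proof -
      have p: "integrable M (pn n)" "integrable M (qn n)" using dens[of n] by (auto simp: is_density_def)
      have l: "integrable M L" "integrable M L0" using L by (auto simp: is_density_def)
      have j1: "integrable M (\<lambda>x. \<bar>pn n x - L x\<bar>)" using p l by simp
      have j2: "integrable M (\<lambda>x. \<bar>pn n x - qn n x\<bar>)" using p l by simp
      have j3: "integrable M (\<lambda>x. \<bar>qn n x - L0 x\<bar>)" using p l by simp
      have j0: "integrable M (\<lambda>x. \<bar>L x - L0 x\<bar>)" using l by simp
      have "(\<integral>x. \<bar>L x - L0 x\<bar> \<partial>M) \<le> (\<integral>x. \<bar>pn n x - L x\<bar> + \<bar>pn n x - qn n x\<bar> + \<bar>qn n x - L0 x\<bar> \<partial>M)"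
        by (rule integral_mono[OF j0]) (use j1 j2 j3 in auto)
      also have "\<dots> = (\<integral>x. \<bar>pn n x - L x\<bar> \<partial>M) + (\<integral>x. \<bar>pn n x - qn n x\<bar> \<partial>M) + (\<integral>x. \<bar>qn n x - L0 x\<bar> \<partial>M)"
        using j1 j2 j3 by simp
      finally have "d_TV M L L0 \<le> d_TV M (pn n) L + d_TV M (pn n) (qn n) + d_TV M (qn n) L0"
        unfolding d_TV_def by simp
      then show ?thesis using part1[of n] by simp
    qed
    have "(\<lambda>n. d_TV M (pn n) L + B + d_TV M (qn n) L0) \<longlonglongrightarrow> 0 + B + 0"
      by (intro tendsto_add l1 l2 tendsto_const)
    then have "d_TV M L L0 \<le> 0 + B + 0"
      by (rule tendsto_le[OF trivial_limit_sequentially _ tendsto_const]) (use tri in auto)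
    then show ?thesis by simp
  qed
  show ?thesis using part1 part2 unfolding pn_def qn_def B_def by blast
qed

end


theorem theorem8:
  fixes M :: "'a measure" and N :: "real measure"
    and r p0 p_ref :: "'a \<Rightarrow> real" and K :: nat and \<alpha> \<eta> :: real
  assumes sf: "sigma_finite_measure M"
    and r_meas: "r \<in> borel_measurable M"
    and noise: "prob_space N" "sets N = sets borel"
    and K: "2 \<le> K"
    and \<alpha>: "(real K - 1) / real K < \<alpha>" "\<alpha> < 1"
    and p0: "is_density M p0" "integrable M (\<lambda>x. p0 x * \<bar>ln (p0 x)\<bar>)"
    and pref: "is_density M p_ref" "integrable M (\<lambda>x. p_ref x * \<bar>ln (p_ref x)\<bar>)"
    and \<eta>: "\<eta> > 0"
  shows "\<forall>dr. dr \<in> borel_measurable M \<and> (AE x in M. \<bar>dr x\<bar> \<le> \<eta>) \<longrightarrow>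
           (\<forall>n. d_TV M ((T_map K M N r \<alpha> p_ref dr ^^ n) p0)
                        ((T_map K M N r \<alpha> p_ref (\<lambda>_. 0) ^^ n) p0)
                 \<le> \<eta> * ((1 - \<alpha>) * real K) / (4 * (1 - (1 - \<alpha>) * real K)))
         \<and> (\<forall>L L0. is_density M L \<and> is_density M L0
              \<and> (\<lambda>n. d_TV M ((T_map K M N r \<alpha> p_ref dr ^^ n) p0) L) \<longlonglongrightarrow> 0
              \<and> (\<lambda>n. d_TV M ((T_map K M N r \<alpha> p_ref (\<lambda>_. 0) ^^ n) p0) L0) \<longlonglongrightarrow> 0
              \<longrightarrow> d_TV M L L0 \<le> \<eta> * ((1 - \<alpha>) * real K) / (4 * (1 - (1 - \<alpha>) * real K)))"
proof -
  have "setting M N r K" using noise r_meas K by (simp add: setting_def)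
  note ml = setting.main_loc[OF this \<alpha> p0(1) pref(1) \<eta>]
  show ?thesis
    apply (intro allI impI)
    apply (erule conjE)
    apply (rule ml)
     apply assumption+
    done
qed

end
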